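(* Let $Q=\exists x_1\forall x_2\exists x_3\cdots\forall x_n\,F$ where $n\ge 2$ is even, the quantifiers strictly alternate starting with $\exists$, and $F=F_1\wedge\cdots\wedge F_m$ with $F_i=(l_{i,1}\vee l_{i,2}\vee l_{i,3})$, each literal $l_{i,j}$ being $x_l$ or $\overline{x_l}$ for some $l\in\{1,\dots,n\}$. Construct the graph-game instance $(G,C,s,R)$ as follows. For each $i=1,\dots,n$ add vertices $a_i,b_i,c_i,d_i,e_i,f_i,g_i$ and edges $(a_i,b_i),(a_i,c_i),(b_i,e_i),(c_i,f_i),(e_i,d_i),(f_i,d_i),(d_i,g_i)$; add edges $(g_i,a_{i+1})$ for $i=1,\dots,n-1$; add a vertex $g_0$ and edge $(g_0,a_1)$. Add vertices $x_i,y_i,z_i$ ($i=1,\dots,m$) and $w_{i,j}$ ($i=1,\dots,m$, $j=1,2,3$) with edges $(x_i,y_i),(y_i,z_i),(z_i,w_{i,1}),(w_{i,1},w_{i,2}),(w_{i,2},w_{i,3})$ for all $i$, $(x_i,x_{i+1})$ for $i=1,\dots,m-1$, and $(g_n,x_1)$. Let $C=\{g_0,\dots,g_{n-1}\}\cup\{z_1,\dots,z_m\}$, $s=g_0$, and let $R$ consist of the pairs $(w_{i,j},(b_l,e_l))$ whenever $l_{i,j}=x_l$ and $(w_{i,j},(c_l,f_l))$ whenever $l_{i,j}=\overline{x_l}$. Then the $\exists$-player has a winning strategy in the graph game on $(G,C,s,R)$ if and only if $Q$ is true.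
   Context: The graph game: an instance consists of a finite directed graph $G$, a set $C\subseteq V(G)$, a vertex $s\in C$, and a relation $R\subseteq V(G)\times E(G)$ ("$v$ points to $e$" if $(v,e)\in R$). At any moment $E(G)$ is the current edge set (edges are deleted during play) and $R^{-1}(E(G))$ is the set of vertices pointing to some edge currently in $E(G)$. The $\exists$-player and $\forall$-player move alternately, $\exists$ first; there is a unique active vertex, initially $s$. A move from active vertex $u$: the current player chooses $v\in C\cup R^{-1}(E(G))$ and a directed path $P$ in the current graph from $u$ to $v$ whose internal vertices all lie outside $C\cup R^{-1}(E(G))$; the edges of $P$ are deleted, $v$ becomes active, and the turn passes. A player who cannot move loses; a player who moves to a vertex of $R^{-1}(E(G))$ wins. *)

theory Defs
  imports Main
begin

definition pointing :: "('v \<times> ('v \<times> 'v)) set \<Rightarrow> ('v \<times> 'v) set \<Rightarrow> 'v set" where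
  "pointing R E = {v. \<exists>e\<in>E. (v, e) \<in> R}"

definition path_edges :: "'v list \<Rightarrow> ('v \<times> 'v) set" where
  "path_edges p = set (zip p (tl p))"

definition is_move :: "'v set \<Rightarrow> ('v \<times> ('v \<times> 'v)) set \<Rightarrow> ('v \<times> 'v) set \<Rightarrow> 'v \<Rightarrow> 'v \<Rightarrow> 'v list \<Rightarrow> bool" where
  "is_move C R E u v p \<longleftrightarrow>
     2 \<le> length p \<and> hd p = u \<and> last p = v \<and> distinct p \<and> path_edges p \<subseteq> E \<and>
     v \<in> C \<union> pointing R E \<and>
     (\<forall>x\<in>set (butlast (tl p)). x \<notin> C \<union> pointing R E)"

text \<open>wins C R E u: the player to move in position (current edge set E, active vertex u)
  has a winning strategy; loses C R E u: the player to move has no way to avoid losing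
  (the opponent has a winning strategy). Since each move deletes at least one edge and
  the graph is finite, every play is finite, so these least fixed points characterize
  the existence of winning strategies.\<close>
inductive wins :: "'v set \<Rightarrow> ('v \<times> ('v \<times> 'v)) set \<Rightarrow> ('v \<times> 'v) set \<Rightarrow> 'v \<Rightarrow> bool"
  and loses :: "'v set \<Rightarrow> ('v \<times> ('v \<times> 'v)) set \<Rightarrow> ('v \<times> 'v) set \<Rightarrow> 'v \<Rightarrow> bool"
  for C :: "'v set" and R :: "('v \<times> ('v \<times> 'v)) set" where
  win_now: "is_move C R E u v p \<Longrightarrow> v \<in> pointing R E \<Longrightarrow> wins C R E u"
| win_later: "is_move C R E u v p \<Longrightarrow> loses C R (E - path_edges p) v \<Longrightarrow> wins C R E u"
| lose: "(\<And>v p. is_move C R E u v p \<Longrightarrow> v \<notin> pointing R E \<and> wins C R (E - path_edges p) v)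
         \<Longrightarrow> loses C R E u"

definition exists_player_wins :: "('v \<times> 'v) set \<Rightarrow> 'v set \<Rightarrow> 'v \<Rightarrow> ('v \<times> ('v \<times> 'v)) set \<Rightarrow> bool" where
  "exists_player_wins E C s R = wins C R E s"

text \<open>A literal is (l, True) for x_l and (l, False) for the negation of x_l.\<close>
definition lit_val :: "(nat \<Rightarrow> bool) \<Rightarrow> nat \<times> bool \<Rightarrow> bool" where
  "lit_val \<sigma> lt = (if snd lt then \<sigma> (fst lt) else \<not> \<sigma> (fst lt))"

definition cnf_val :: "nat \<Rightarrow> (nat \<Rightarrow> nat \<Rightarrow> nat \<times> bool) \<Rightarrow> (nat \<Rightarrow> bool) \<Rightarrow> bool" where
  "cnf_val m l \<sigma> \<longleftrightarrow> (\<forall>i\<in>{1..m}. \<exists>j\<in>{1..3}. lit_val \<sigma> (l i j))"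

text \<open>qsat r k \<sigma> M: truth of Q_k x_k Q_{k+1} x_{k+1} ... Q_{k+r-1} x_{k+r-1}. M
  under partial assignment \<sigma>, where Q_j = \<exists> for odd j and \<forall> for even j.\<close>
fun qsat :: "nat \<Rightarrow> nat \<Rightarrow> (nat \<Rightarrow> bool) \<Rightarrow> ((nat \<Rightarrow> bool) \<Rightarrow> bool) \<Rightarrow> bool" where
  "qsat 0 k \<sigma> M = M \<sigma>"
| "qsat (Suc r) k \<sigma> M =
     (if odd k then (\<exists>b. qsat r (Suc k) (\<sigma>(k := b)) M)
      else (\<forall>b. qsat r (Suc k) (\<sigma>(k := b)) M))"

definition qbf_true :: "nat \<Rightarrow> nat \<Rightarrow> (nat \<Rightarrow> nat \<Rightarrow> nat \<times> bool) \<Rightarrow> bool" where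
  "qbf_true n m l = qsat n 1 (\<lambda>_. False) (cnf_val m l)"

datatype vtx = VA nat | VB nat | VC nat | VD nat | VE nat | VF nat | VG nat
  | VX nat | VY nat | VZ nat | VW nat nat

definition red_vertices :: "nat \<Rightarrow> nat \<Rightarrow> vtx set" where
  "red_vertices n m =
     (\<Union>i\<in>{1..n}. {VA i, VB i, VC i, VD i, VE i, VF i, VG i}) \<union> {VG 0} \<union>
     (\<Union>i\<in>{1..m}. {VX i, VY i, VZ i, VW i 1, VW i 2, VW i 3})"

definition red_edges :: "nat \<Rightarrow> nat \<Rightarrow> (vtx \<times> vtx) set" where
  "red_edges n m =
     (\<Union>i\<in>{1..n}. {(VA i, VB i), (VA i, VC i), (VB i, VE i), (VC i, VF i),
                    (VE i, VD i), (VF i, VD i), (VD i, VG i)}) \<union>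
     {(VG i, VA (Suc i)) | i. 1 \<le> i \<and> i < n} \<union>
     {(VG 0, VA 1)} \<union>
     (\<Union>i\<in>{1..m}. {(VX i, VY i), (VY i, VZ i), (VZ i, VW i 1), (VW i 1, VW i 2), (VW i 2, VW i 3)}) \<union>
     {(VX i, VX (Suc i)) | i. 1 \<le> i \<and> i < m} \<union>
     {(VG n, VX 1)}"

definition red_C :: "nat \<Rightarrow> nat \<Rightarrow> vtx set" where
  "red_C n m = {VG i | i. i < n} \<union> {VZ i | i. 1 \<le> i \<and> i \<le> m}"

definition red_s :: vtx where
  "red_s = VG 0"

definition red_R :: "nat \<Rightarrow> (nat \<Rightarrow> nat \<Rightarrow> nat \<times> bool) \<Rightarrow> (vtx \<times> (vtx \<times> vtx)) set" where
  "red_R m l =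
     {(VW i j, (VB k, VE k)) | i j k. i \<in> {1..m} \<and> j \<in> {1..3} \<and> l i j = (k, True)} \<union>
     {(VW i j, (VC k, VF k)) | i j k. i \<in> {1..m} \<and> j \<in> {1..3} \<and> l i j = (k, False)}"

end

theory Submission
  imports Defs
begin



lemma is_move_Cons:
  "is_move C R E u v (u # s # rest) \<longleftrightarrow>
   (u, s) \<in> E \<and> u \<notin> set (s # rest) \<and>
   (if rest = [] then v = s \<and> s \<in> C \<union> pointing R E
    else s \<notin> C \<union> pointing R E \<and> is_move C R E s v (s # rest))"
  by (cases rest) (auto simp: is_move_def path_edges_def)

lemma mv_step: "is_move C R E u v p \<Longrightarrow> \<exists>s r. p = u # s # r \<and> (u,s)\<in>E \<and>
   (r = [] \<and> v = s \<and> s \<in> C \<union> pointing R E \<or> r \<noteq> [] \<and> s \<notin> C \<union> pointing R E \<and> is_move C R E s v (s # r))"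
proof -
  assume a: "is_move C R E u v p"
  then obtain s r where p: "p = u # s # r"
    unfolding is_move_def by (cases p; cases "tl p") auto
  show ?thesis using a unfolding p is_move_Cons by (auto split: if_splits)
qed

lemma path_edges_append: "path_edges (xs @ y # ys) = path_edges (xs @ [y]) \<union> path_edges (y # ys)"
proof (induction xs)
  case Nil then show ?case by (simp add: path_edges_def)
next
  case (Cons a xs)
  then show ?case by (cases xs) (auto simp: path_edges_def)
qed

lemma path_edges_sub: "path_edges p \<subseteq> set p \<times> set p"
  unfolding path_edges_def by (auto dest: set_zip_leftD set_zip_rightD list.set_sel(2)[rotated] intro: list.set_sel)

lemma excl: "wins C R E u \<Longrightarrow> \<not> loses C R E u" and "loses C R E u \<Longrightarrow> \<not> wins C R E u"
proof (induction rule: wins_loses.inducts)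
  case (win_now E u v p)
  then show ?case by (auto elim: loses.cases)
next
  case (win_later E u v p)
  then show ?case by (auto elim: loses.cases)
next
  case (lose E u)
  then show ?case by (auto elim: wins.cases)
qed




locale red =
  fixes n m :: nat and l :: "nat \<Rightarrow> nat \<Rightarrow> nat \<times> bool"
  assumes n2: "2 \<le> n" and ev: "even n" and m1: "1 \<le> m"
    and lit: "\<forall>i\<in>{1..m}. \<forall>j\<in>{1..3}. fst (l i j) \<in> {1..n}"
begin

abbreviation "E0 \<equiv> red_edges n m"
abbreviation "CC \<equiv> red_C n m"
abbreviation "RR \<equiv> red_R m l"

lemma C_simps[simp]: "VG i \<in> CC \<longleftrightarrow> i < n" "VZ i \<in> CC \<longleftrightarrow> 1 \<le> i \<and> i \<le> m"
  "VA i \<notin> CC" "VB i \<notin> CC" "VC i \<notin> CC" "VD i \<notin> CC" "VE i \<notin> CC" "VF i \<notin> CC"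
  "VX i \<notin> CC" "VY i \<notin> CC" "VW i j \<notin> CC"
  by (auto simp: red_C_def)

lemma P_simps[simp]: "VG i \<notin> pointing RR E" "VZ i \<notin> pointing RR E"
  "VA i \<notin> pointing RR E" "VB i \<notin> pointing RR E" "VC i \<notin> pointing RR E" "VD i \<notin> pointing RR E"
  "VE i \<notin> pointing RR E" "VF i \<notin> pointing RR E"
  "VX i \<notin> pointing RR E" "VY i \<notin> pointing RR E"
  by (auto simp: pointing_def red_R_def)

lemma succ:
  "(VG k, s) \<in> E0 \<Longrightarrow> (k < n \<and> s = VA (Suc k)) \<or> (k = n \<and> s = VX 1)"
  "(VA i, s) \<in> E0 \<Longrightarrow> s = VB i \<or> s = VC i"
  "(VB i, s) \<in> E0 \<Longrightarrow> s = VE i"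
  "(VC i, s) \<in> E0 \<Longrightarrow> s = VF i"
  "(VE i, s) \<in> E0 \<Longrightarrow> s = VD i"
  "(VF i, s) \<in> E0 \<Longrightarrow> s = VD i"
  "(VD i, s) \<in> E0 \<Longrightarrow> s = VG i"
  "(VX i, s) \<in> E0 \<Longrightarrow> s = VY i \<or> (s = VX (Suc i) \<and> i < m)"
  "(VY i, s) \<in> E0 \<Longrightarrow> s = VZ i"
  "(VZ i, s) \<in> E0 \<Longrightarrow> s = VW i 1"
  "(VW i t, s) \<in> E0 \<Longrightarrow> (t = 1 \<and> s = VW i 2) \<or> (t = 2 \<and> s = VW i 3)"
  using n2 by (auto simp: red_edges_def)

lemma pointW: "VW i t \<in> pointing RR E \<longleftrightarrow> 1 \<le> i \<and> i \<le> m \<and> 1 \<le> t \<and> t \<le> 3 \<and>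
   (if snd (l i t) then (VB (fst (l i t)), VE (fst (l i t))) \<in> E else (VC (fst (l i t)), VF (fst (l i t))) \<in> E)"
  by (cases "l i t") (auto simp: pointing_def red_R_def)

definition gedges :: "nat \<Rightarrow> (vtx \<times> vtx) set" where
  "gedges i = {(VA i, VB i), (VA i, VC i), (VB i, VE i), (VC i, VF i), (VE i, VD i), (VF i, VD i), (VD i, VG i)}"

definition XP :: "(vtx \<times> vtx) set" where
  "XP = (\<Union>i\<in>{1..m}. {(VX i, VY i), (VY i, VZ i), (VZ i, VW i 1), (VW i 1, VW i 2), (VW i 2, VW i 3)}) \<union>
     {(VX i, VX (Suc i)) | i. 1 \<le> i \<and> i < m} \<union> {(VG n, VX 1)}"

definition ginv :: "nat \<Rightarrow> (nat \<Rightarrow> bool) \<Rightarrow> (vtx \<times> vtx) set \<Rightarrow> bool" where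
  "ginv k \<sigma> E \<longleftrightarrow> E \<subseteq> E0 \<and> (\<forall>i. k < i \<longrightarrow> i \<le> n \<longrightarrow> gedges i \<subseteq> E) \<and>
     (\<forall>i. k \<le> i \<longrightarrow> i < n \<longrightarrow> (VG i, VA (Suc i)) \<in> E) \<and> XP \<subseteq> E \<and>
     (\<forall>i. 1 \<le> i \<longrightarrow> i \<le> k \<longrightarrow> ((VB i, VE i) \<in> E \<longleftrightarrow> \<sigma> i) \<and> ((VC i, VF i) \<in> E \<longleftrightarrow> \<not> \<sigma> i))"

definition gp0 :: "nat \<Rightarrow> bool \<Rightarrow> vtx list" where
  "gp0 k b = [VG k, VA (Suc k), if b then VC (Suc k) else VB (Suc k), if b then VF (Suc k) else VE (Suc k), VD (Suc k)]"

definition gp :: "nat \<Rightarrow> bool \<Rightarrow> vtx list" where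
  "gp k b = gp0 k b @ [VG (Suc k)]"

definition xp :: "nat \<Rightarrow> vtx list" where
  "xp j = map VX [1..<Suc j] @ [VY j, VZ j]"

lemma ginv0: "ginv 0 \<sigma> E0"
  unfolding ginv_def gedges_def XP_def by (auto simp: red_edges_def)

lemma pe_gp: "path_edges (gp k b) = {(VG k, VA (Suc k)), (VA (Suc k), if b then VC (Suc k) else VB (Suc k)),
   (if b then VC (Suc k) else VB (Suc k), if b then VF (Suc k) else VE (Suc k)),
   (if b then VF (Suc k) else VE (Suc k), VD (Suc k)), (VD (Suc k), VG (Suc k))}"
  by (simp add: path_edges_def gp_def gp0_def)

lemma ginv_step: "k < n \<Longrightarrow> ginv k \<sigma> E \<Longrightarrow> ginv (Suc k) (\<sigma>(Suc k := b)) (E - path_edges (gp k b))"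
  unfolding ginv_def pe_gp
  apply (intro conjI)
      apply blast
     apply (auto simp: gedges_def)[1]
    apply auto[1]
   apply (auto simp: XP_def)[1]
  apply (auto simp: gedges_def le_Suc_eq)
  done

end


context red begin

lemma xchain_char: "m - i = d \<Longrightarrow> 1 \<le> i \<Longrightarrow> i \<le> m \<Longrightarrow> E \<subseteq> E0 \<Longrightarrow> is_move CC RR E (VX i) v p \<Longrightarrow>
   \<exists>j. i \<le> j \<and> j \<le> m \<and> p = map VX [i..<Suc j] @ [VY j, VZ j] \<and> v = VZ j"
proof (induction d arbitrary: i v p)
  case 0
  from mv_step[OF 0(5)] obtain s r where h: "p = VX i # s # r" "(VX i, s) \<in> E"
    "r = [] \<and> v = s \<and> s \<in> CC \<union> pointing RR E \<or> r \<noteq> [] \<and> s \<notin> CC \<union> pointing RR E \<and> is_move CC RR E s v (s # r)"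
    by blast
  have "s = VY i" using succ(8)[of i s] h(2) 0 by auto
  with h have mv: "is_move CC RR E (VY i) v (VY i # r)" by auto
  from mv_step[OF mv] obtain s2 r2 where h2: "r = s2 # r2" "(VY i, s2) \<in> E"
    "r2 = [] \<and> v = s2 \<and> s2 \<in> CC \<union> pointing RR E \<or> r2 \<noteq> [] \<and> s2 \<notin> CC \<union> pointing RR E \<and> is_move CC RR E s2 v (s2 # r2)"
    by blast
  have "s2 = VZ i" using succ(9)[of i s2] h2(2) 0 by auto
  with h2 0 have "r2 = []" "v = VZ i" by auto
  then show ?case using h h2 \<open>s = VY i\<close> \<open>s2 = VZ i\<close> 0 by auto
next
  case (Suc d)
  from mv_step[OF Suc(6)] obtain s r where h: "p = VX i # s # r" "(VX i, s) \<in> E"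
    "r = [] \<and> v = s \<and> s \<in> CC \<union> pointing RR E \<or> r \<noteq> [] \<and> s \<notin> CC \<union> pointing RR E \<and> is_move CC RR E s v (s # r)"
    by blast
  have "s = VY i \<or> (s = VX (Suc i) \<and> i < m)" using succ(8)[of i s] h(2) Suc by auto
  then show ?case
  proof
    assume s: "s = VY i"
    with h have mv: "is_move CC RR E (VY i) v (VY i # r)" by auto
    from mv_step[OF mv] obtain s2 r2 where h2: "r = s2 # r2" "(VY i, s2) \<in> E"
      "r2 = [] \<and> v = s2 \<and> s2 \<in> CC \<union> pointing RR E \<or> r2 \<noteq> [] \<and> s2 \<notin> CC \<union> pointing RR E \<and> is_move CC RR E s2 v (s2 # r2)"
      by blast
    have "s2 = VZ i" using succ(9)[of i s2] h2(2) Suc by auto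
    with h2 Suc have "r2 = []" "v = VZ i" by auto
    then show ?case using h h2 s \<open>s2 = VZ i\<close> Suc by auto
  next
    assume s: "s = VX (Suc i) \<and> i < m"
    with h have mv: "is_move CC RR E (VX (Suc i)) v (VX (Suc i) # r)" by auto
    have "\<exists>j. Suc i \<le> j \<and> j \<le> m \<and> VX (Suc i) # r = map VX [Suc i..<Suc j] @ [VY j, VZ j] \<and> v = VZ j"
      by (rule Suc.IH[OF _ _ _ _ mv]) (use Suc.prems s in auto)
    then obtain j where
      j: "Suc i \<le> j" "j \<le> m" "VX (Suc i) # r = map VX [Suc i..<Suc j] @ [VY j, VZ j]" "v = VZ j"
      by blast
    have "p = map VX [i..<Suc j] @ [VY j, VZ j]"
      using h(1) s j by (simp add: upt_conv_Cons)
    then show ?case using j by auto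
  qed
qed

lemma xchain_move: "j - i = d \<Longrightarrow> 1 \<le> i \<Longrightarrow> i \<le> j \<Longrightarrow> j \<le> m \<Longrightarrow> XP \<subseteq> E \<Longrightarrow>
  is_move CC RR E (VX i) (VZ j) (map VX [i..<Suc j] @ [VY j, VZ j])"
proof (induction d arbitrary: i)
  case 0
  then have "i = j" by auto
  then show ?case using 0 by (auto simp: is_move_Cons XP_def)
next
  case (Suc d)
  then have mv: "is_move CC RR E (VX (Suc i)) (VZ j) (map VX [Suc i..<Suc j] @ [VY j, VZ j])" by auto
  have eq: "map VX [i..<Suc j] @ [VY j, VZ j] = VX i # VX (Suc i) # (map VX [Suc (Suc i)..<Suc j] @ [VY j, VZ j])"
    "map VX [Suc i..<Suc j] @ [VY j, VZ j] = VX (Suc i) # (map VX [Suc (Suc i)..<Suc j] @ [VY j, VZ j])"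
    using Suc by (auto simp: upt_conv_Cons)
  show ?case using mv Suc unfolding eq by (auto simp: is_move_Cons XP_def)
qed

end


context red begin

lemma g_char: "k < n \<Longrightarrow> E \<subseteq> E0 \<Longrightarrow> is_move CC RR E (VG k) v p \<Longrightarrow>
  \<exists>b. (Suc k < n \<and> p = gp k b \<and> v = VG (Suc k)) \<or>
      (Suc k = n \<and> (\<exists>j. 1 \<le> j \<and> j \<le> m \<and> p = gp0 k b @ VG n # xp j \<and> v = VZ j))"
proof -
  assume k: "k < n" and E: "E \<subseteq> E0" and mv0: "is_move CC RR E (VG k) v p"
  from mv_step[OF mv0] obtain s1 r1 where h1: "p = VG k # s1 # r1" "(VG k, s1) \<in> E"
    "r1 = [] \<and> v = s1 \<and> s1 \<in> CC \<union> pointing RR E \<or> r1 \<noteq> [] \<and> s1 \<notin> CC \<union> pointing RR E \<and> is_move CC RR E s1 v (s1 # r1)"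
    by blast
  have s1: "s1 = VA (Suc k)" using succ(1)[of k s1] h1(2) E k by auto
  with h1 have mv1: "is_move CC RR E (VA (Suc k)) v (VA (Suc k) # r1)" by auto
  from mv_step[OF mv1] obtain s2 r2 where h2: "r1 = s2 # r2" "(VA (Suc k), s2) \<in> E"
    "r2 = [] \<and> v = s2 \<and> s2 \<in> CC \<union> pointing RR E \<or> r2 \<noteq> [] \<and> s2 \<notin> CC \<union> pointing RR E \<and> is_move CC RR E s2 v (s2 # r2)"
    by blast
  define b where "b = (s2 = VC (Suc k))"
  have s2: "s2 = (if b then VC (Suc k) else VB (Suc k))" using succ(2)[of "Suc k" s2] h2(2) E b_def by auto
  with h2 have mv2: "is_move CC RR E s2 v (s2 # r2)" by (auto split: if_splits)
  from mv_step[OF mv2] obtain s3 r3 where h3: "r2 = s3 # r3" "(s2, s3) \<in> E"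
    "r3 = [] \<and> v = s3 \<and> s3 \<in> CC \<union> pointing RR E \<or> r3 \<noteq> [] \<and> s3 \<notin> CC \<union> pointing RR E \<and> is_move CC RR E s3 v (s3 # r3)"
    by blast
  have s3: "s3 = (if b then VF (Suc k) else VE (Suc k))" using succ(3,4)[of "Suc k" s3] h3(2) E s2
    by (auto split: if_splits)
  with h3 have mv3: "is_move CC RR E s3 v (s3 # r3)" by (auto split: if_splits)
  from mv_step[OF mv3] obtain s4 r4 where h4: "r3 = s4 # r4" "(s3, s4) \<in> E"
    "r4 = [] \<and> v = s4 \<and> s4 \<in> CC \<union> pointing RR E \<or> r4 \<noteq> [] \<and> s4 \<notin> CC \<union> pointing RR E \<and> is_move CC RR E s4 v (s4 # r4)"
    by blast
  have s4: "s4 = VD (Suc k)" using succ(5,6)[of "Suc k" s4] h4(2) E s3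
    by (auto split: if_splits)
  with h4 have mv4: "is_move CC RR E (VD (Suc k)) v (VD (Suc k) # r4)" by auto
  from mv_step[OF mv4] obtain s5 r5 where h5: "r4 = s5 # r5" "(VD (Suc k), s5) \<in> E"
    "r5 = [] \<and> v = s5 \<and> s5 \<in> CC \<union> pointing RR E \<or> r5 \<noteq> [] \<and> s5 \<notin> CC \<union> pointing RR E \<and> is_move CC RR E s5 v (s5 # r5)"
    by blast
  have s5: "s5 = VG (Suc k)" using succ(7)[of "Suc k" s5] h5(2) E by auto
  have pre: "p = gp0 k b @ VG (Suc k) # r5"
    using h1 h2 h3 h4 h5 s1 s2 s3 s4 s5 by (simp add: gp0_def)
  show ?thesis
  proof (cases "Suc k < n")
    case True
    then have "r5 = []" "v = VG (Suc k)" using h5 s5 by auto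
    then show ?thesis using pre True by (auto simp: gp_def)
  next
    case False
    then have kn: "Suc k = n" using k by auto
    then have mv5: "is_move CC RR E (VG n) v (VG n # r5)" using h5 s5 by auto
    from mv_step[OF mv5] obtain s6 r6 where h6: "r5 = s6 # r6" "(VG n, s6) \<in> E"
      "r6 = [] \<and> v = s6 \<and> s6 \<in> CC \<union> pointing RR E \<or> r6 \<noteq> [] \<and> s6 \<notin> CC \<union> pointing RR E \<and> is_move CC RR E s6 v (s6 # r6)"
      by blast
    have s6: "s6 = VX 1" using succ(1)[of n s6] h6(2) E by auto
    then have mv6: "is_move CC RR E (VX 1) v (VX 1 # r6)" using h6 by auto
    obtain j where j: "1 \<le> j" "j \<le> m" "VX 1 # r6 = map VX [1..<Suc j] @ [VY j, VZ j]" "v = VZ j"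
      using xchain_char[OF refl _ _ E mv6] m1 by auto
    have "p = gp0 k b @ VG n # xp j" using pre kn h6 s6 j by (simp add: xp_def)
    then show ?thesis using kn j by auto
  qed
qed

lemma g_move: "Suc k < n \<Longrightarrow> ginv k \<sigma> E \<Longrightarrow> is_move CC RR E (VG k) (VG (Suc k)) (gp k b)"
  unfolding ginv_def gedges_def gp_def gp0_def
  by (auto simp: is_move_Cons)

lemma f_move: "Suc k = n \<Longrightarrow> ginv k \<sigma> E \<Longrightarrow> 1 \<le> j \<Longrightarrow> j \<le> m \<Longrightarrow>
  is_move CC RR E (VG k) (VZ j) (gp0 k b @ VG n # xp j)"
proof -
  assume a: "Suc k = n" "ginv k \<sigma> E" "1 \<le> j" "j \<le> m"
  have x: "is_move CC RR E (VX 1) (VZ j) (xp j)"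
    unfolding xp_def by (rule xchain_move[OF refl]) (use a in \<open>auto simp: ginv_def\<close>)
  obtain q where eq: "xp j = VX 1 # q" "q \<noteq> []" using a by (simp add: xp_def upt_rec)
  have nin: "VG n \<notin> set (xp j)" "VG k \<notin> set (xp j)" by (auto simp: xp_def)
  have "(VG n, VX 1) \<in> E" using a by (auto simp: ginv_def XP_def)
  then have y: "is_move CC RR E (VG n) (VZ j) (VG n # xp j)"
    using x nin eq unfolding eq(1) by (subst is_move_Cons) auto
  have y': "is_move CC RR E (VG (Suc k)) (VZ j) (VG (Suc k) # xp j)" using y a(1) by simp
  have nin2: "VG (Suc k) \<notin> set (xp j)" "VA (Suc k) \<notin> set (xp j)" "VB (Suc k) \<notin> set (xp j)"
    "VC (Suc k) \<notin> set (xp j)" "VD (Suc k) \<notin> set (xp j)" "VE (Suc k) \<notin> set (xp j)"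
    "VF (Suc k) \<notin> set (xp j)" by (auto simp: xp_def)
  have k: "k < n" using a(1) by simp
  have ed: "(VG k, VA (Suc k)) \<in> E" "gedges (Suc k) \<subseteq> E" using a(2) k a(1) by (auto simp: ginv_def)
  have nl: "\<not> Suc k < n" using a(1) by simp
  have ne: "xp j \<noteq> []" by (simp add: xp_def)
  have "is_move CC RR E (VG k) (VZ j) (gp0 k b @ VG (Suc k) # xp j)"
    using y' k nin2 ne ed nl \<open>VG k \<notin> set (xp j)\<close> unfolding gp0_def gedges_def
    by (auto simp: is_move_Cons)
  then show ?thesis using a(1) by simp
qed

end


context red begin

definition zinv :: "(nat \<Rightarrow> bool) \<Rightarrow> (vtx \<times> vtx) set \<Rightarrow> nat \<Rightarrow> bool" where
  "zinv \<sigma> E j \<longleftrightarrow> E \<subseteq> E0 \<and> {(VZ j, VW j 1), (VW j 1, VW j 2), (VW j 2, VW j 3)} \<subseteq> E \<and>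
     (\<forall>t\<in>{1..3}. VW j t \<in> pointing RR E \<longleftrightarrow> lit_val \<sigma> (l j t))"

lemma z_char: "E \<subseteq> E0 \<Longrightarrow> is_move CC RR E (VZ j) v p \<Longrightarrow> v = VW j 1 \<or> v = VW j 2 \<or> v = VW j 3"
proof -
  assume E: "E \<subseteq> E0" and mv0: "is_move CC RR E (VZ j) v p"
  from mv_step[OF mv0] obtain s1 r1 where h1: "(VZ j, s1) \<in> E"
    "r1 = [] \<and> v = s1 \<or> r1 \<noteq> [] \<and> is_move CC RR E s1 v (s1 # r1)"
    by blast
  have s1: "s1 = VW j 1" using succ(10)[of j s1] h1(1) E by auto
  show ?thesis
  proof (cases "r1 = []")
    case True then show ?thesis using h1 s1 by auto
  next
    case False
    then have mv1: "is_move CC RR E (VW j 1) v (VW j 1 # r1)" using h1 s1 by auto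
    from mv_step[OF mv1] obtain s2 r2 where h2: "(VW j 1, s2) \<in> E"
      "r2 = [] \<and> v = s2 \<or> r2 \<noteq> [] \<and> is_move CC RR E s2 v (s2 # r2)"
      by blast
    have s2: "s2 = VW j 2" using succ(11)[of j 1 s2] h2(1) E by auto
    show ?thesis
    proof (cases "r2 = []")
      case True then show ?thesis using h2 s2 by auto
    next
      case False
      then have mv2: "is_move CC RR E (VW j 2) v (VW j 2 # r2)" using h2 s2 by auto
      from mv_step[OF mv2] obtain s3 r3 where h3: "(VW j 2, s3) \<in> E"
        "r3 = [] \<and> v = s3 \<or> r3 \<noteq> [] \<and> is_move CC RR E s3 v (s3 # r3)"
        by blast
      have s3: "s3 = VW j 3" using succ(11)[of j 2 s3] h3(1) E by auto
      show ?thesis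
      proof (cases "r3 = []")
        case True then show ?thesis using h3 s3 by auto
      next
        case False
        then have mv3: "is_move CC RR E (VW j 3) v (VW j 3 # r3)" using h3 s3 by auto
        from mv_step[OF mv3] obtain s4 r4 where h4: "(VW j 3, s4) \<in> E" by blast
        then show ?thesis using succ(11)[of j 3 s4] E by auto
      qed
    qed
  qed
qed

lemma z_det: "zinv \<sigma> E j \<Longrightarrow>
  ((\<exists>t\<in>{1..3}. lit_val \<sigma> (l j t)) \<longrightarrow> wins CC RR E (VZ j)) \<and>
  (\<not>(\<exists>t\<in>{1..3}. lit_val \<sigma> (l j t)) \<longrightarrow> loses CC RR E (VZ j))"
proof (intro conjI impI)
  assume z: "zinv \<sigma> E j" and ex: "\<exists>t\<in>{1..3}. lit_val \<sigma> (l j t)"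
  have P: "\<And>t. t \<in> {1..3} \<Longrightarrow> VW j t \<in> pointing RR E \<longleftrightarrow> lit_val \<sigma> (l j t)" using z by (auto simp: zinv_def)
  have e: "(VZ j, VW j 1) \<in> E" "(VW j 1, VW j 2) \<in> E" "(VW j 2, VW j 3) \<in> E" using z by (auto simp: zinv_def)
  show "wins CC RR E (VZ j)"
  proof (cases "lit_val \<sigma> (l j 1)")
    case True
    then have "VW j 1 \<in> pointing RR E" using P[of 1] by auto
    then show ?thesis using e by (intro win_now[of _ _ _ _ "VW j 1" "[VZ j, VW j 1]"]) (auto simp: is_move_Cons)
  next
    case F1: False
    show ?thesis
    proof (cases "lit_val \<sigma> (l j 2)")
      case True
      then have "VW j 2 \<in> pointing RR E" "VW j 1 \<notin> pointing RR E" using P[of 1] P[of 2] F1 by auto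
      then show ?thesis using e by (intro win_now[of _ _ _ _ "VW j 2" "[VZ j, VW j 1, VW j 2]"]) (auto simp: is_move_Cons)
    next
      case False
      then have "lit_val \<sigma> (l j 3)" using ex F1 by (auto simp: numeral_eq_Suc le_Suc_eq)
      then have "VW j 3 \<in> pointing RR E" "VW j 2 \<notin> pointing RR E" "VW j 1 \<notin> pointing RR E"
        using P[of 1] P[of 2] P[of 3] F1 False by auto
      then show ?thesis using e by (intro win_now[of _ _ _ _ "VW j 3" "[VZ j, VW j 1, VW j 2, VW j 3]"]) (auto simp: is_move_Cons)
    qed
  qed
next
  assume z: "zinv \<sigma> E j" and nex: "\<not>(\<exists>t\<in>{1..3}. lit_val \<sigma> (l j t))"
  have P: "\<And>t. t \<in> {1..3} \<Longrightarrow> VW j t \<in> pointing RR E \<longleftrightarrow> lit_val \<sigma> (l j t)" using z by (auto simp: zinv_def)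
  show "loses CC RR E (VZ j)"
  proof (rule lose)
    fix v p assume mv: "is_move CC RR E (VZ j) v p"
    then have v: "v = VW j 1 \<or> v = VW j 2 \<or> v = VW j 3" using z_char z by (auto simp: zinv_def)
    have "v \<in> CC \<union> pointing RR E" using mv by (auto simp: is_move_def)
    then have "v \<in> pointing RR E" using v by auto
    then show "v \<notin> pointing RR E \<and> wins CC RR (E - path_edges p) v" using v P nex by auto
  qed
qed

lemma final_inv: "ginv n \<sigma> E \<Longrightarrow> 1 \<le> j \<Longrightarrow> j \<le> m \<Longrightarrow> zinv \<sigma> (E - path_edges (VG n # xp j)) j"
proof -
  assume g: "ginv n \<sigma> E" and j: "1 \<le> j" "j \<le> m"
  let ?S = "set (VG n # xp j)"
  have S: "?S \<subseteq> insert (VG n) (range VX) \<union> {VY j, VZ j}" by (auto simp: xp_def)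
  have PE: "path_edges (VG n # xp j) \<subseteq> ?S \<times> ?S" by (rule path_edges_sub)
  have nS: "VW a b \<notin> ?S" "VB a \<notin> ?S" "VC a \<notin> ?S" for a b using S by auto
  have mem: "(VZ j, VW j b) \<notin> path_edges (VG n # xp j)" "(VW j a, VW j b) \<notin> path_edges (VG n # xp j)"
     "(VB a, VE a) \<notin> path_edges (VG n # xp j)" "(VC a, VF a) \<notin> path_edges (VG n # xp j)" for a b
    using PE nS by blast+
  have E: "E \<subseteq> E0" using g by (auto simp: ginv_def)
  have ed: "{(VZ j, VW j 1), (VW j 1, VW j 2), (VW j 2, VW j 3)} \<subseteq> E" using g j by (auto simp: ginv_def XP_def)
  have pt: "VW j t \<in> pointing RR (E - path_edges (VG n # xp j)) \<longleftrightarrow> lit_val \<sigma> (l j t)" if t: "t \<in> {1..3}" for t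
  proof -
    obtain a bb where lt: "l j t = (a, bb)" by (cases "l j t")
    have a: "1 \<le> a" "a \<le> n" using lit j t lt by force+
    have "((VB a, VE a) \<in> E \<longleftrightarrow> \<sigma> a) \<and> ((VC a, VF a) \<in> E \<longleftrightarrow> \<not> \<sigma> a)" using g a by (auto simp: ginv_def)
    then show ?thesis using mem lt j t by (auto simp: pointW lit_val_def)
  qed
  show ?thesis unfolding zinv_def using E ed mem pt by auto
qed

end


context red begin

definition XX :: "nat \<Rightarrow> (nat \<Rightarrow> bool) \<Rightarrow> bool" where
  "XX k \<sigma> = (if even k then qsat (n - k) (Suc k) \<sigma> (cnf_val m l) else \<not> qsat (n - k) (Suc k) \<sigma> (cnf_val m l))"

lemma XX_step: "Suc k < n \<Longrightarrow> XX k \<sigma> \<longleftrightarrow> (\<exists>b. \<not> XX (Suc k) (\<sigma>(Suc k := b)))"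
proof -
  assume a: "Suc k < n"
  then have nk: "n - k = Suc (n - Suc k)" by simp
  show ?thesis unfolding XX_def nk by (cases "even k") auto
qed

lemma XX_base: "Suc k = n \<Longrightarrow> XX k \<sigma> \<longleftrightarrow> (\<exists>b. \<not> cnf_val m l (\<sigma>(Suc k := b)))"
proof -
  assume a: "Suc k = n"
  then have nk: "n - k = Suc 0" by simp
  have "odd k" using a ev by auto
  then show ?thesis unfolding XX_def nk by auto
qed

lemma main_ind: "n - Suc k = d \<Longrightarrow> k < n \<Longrightarrow> ginv k \<sigma> E \<Longrightarrow>
   (XX k \<sigma> \<longrightarrow> wins CC RR E (VG k)) \<and> (\<not> XX k \<sigma> \<longrightarrow> loses CC RR E (VG k))"
proof (induction d arbitrary: k \<sigma> E)
  case 0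
  then have kn: "Suc k = n" by simp
  have E: "E \<subseteq> E0" using 0 by (auto simp: ginv_def)
  have succ_state: "zinv (\<sigma>(Suc k := b)) (E - path_edges (gp0 k b @ VG n # xp j)) j"
    if j: "1 \<le> j" "j \<le> m" for b j
  proof -
    have g1: "ginv n (\<sigma>(Suc k := b)) (E - path_edges (gp k b))"
      using ginv_step[OF 0(2,3)] kn by simp
    have "E - path_edges (gp0 k b @ VG n # xp j) = (E - path_edges (gp k b)) - path_edges (VG n # xp j)"
      unfolding path_edges_append[of "gp0 k b" "VG n" "xp j"] gp_def using kn by auto
    then show ?thesis using final_inv[OF g1 j] by simp
  qed
  show ?case
  proof (intro conjI impI)
    assume "XX k \<sigma>"
    then obtain b where nb: "\<not> cnf_val m l (\<sigma>(Suc k := b))" using XX_base[OF kn] by auto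
    then obtain j where j: "1 \<le> j" "j \<le> m" "\<not> (\<exists>t\<in>{1..3}. lit_val (\<sigma>(Suc k := b)) (l j t))"
      by (auto simp: cnf_val_def)
    show "wins CC RR E (VG k)"
      by (rule win_later[OF f_move[OF kn 0(3) j(1,2)]])
         (use z_det[OF succ_state[OF j(1,2)]] j(3) in blast)
  next
    assume "\<not> XX k \<sigma>"
    then have all: "cnf_val m l (\<sigma>(Suc k := b))" for b using XX_base[OF kn] by auto
    show "loses CC RR E (VG k)"
    proof (rule lose)
      fix v p assume mv: "is_move CC RR E (VG k) v p"
      from g_char[OF 0(2) E mv] kn obtain b j where bj: "1 \<le> j" "j \<le> m" "p = gp0 k b @ VG n # xp j" "v = VZ j"
        by auto
      have "\<exists>t\<in>{1..3}. lit_val (\<sigma>(Suc k := b)) (l j t)" using all[of b] bj by (auto simp: cnf_val_def)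
      then show "v \<notin> pointing RR E \<and> wins CC RR (E - path_edges p) v"
        using z_det[OF succ_state[OF bj(1,2)]] bj by auto
    qed
  qed
next
  case (Suc d)
  then have kn: "Suc k < n" by simp
  have E: "E \<subseteq> E0" using Suc by (auto simp: ginv_def)
  have IH: "(XX (Suc k) (\<sigma>(Suc k := b)) \<longrightarrow> wins CC RR (E - path_edges (gp k b)) (VG (Suc k))) \<and>
     (\<not> XX (Suc k) (\<sigma>(Suc k := b)) \<longrightarrow> loses CC RR (E - path_edges (gp k b)) (VG (Suc k)))" for b
    by (rule Suc.IH[OF _ kn ginv_step[OF Suc.prems(2,3)]]) (use Suc.prems in simp)
  show ?case
  proof (intro conjI impI)
    assume "XX k \<sigma>"
    then obtain b where nb: "\<not> XX (Suc k) (\<sigma>(Suc k := b))" using XX_step[OF kn] by auto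
    show "wins CC RR E (VG k)"
      by (rule win_later[OF g_move[OF kn Suc.prems(3)]]) (use IH[of b] nb in blast)
  next
    assume "\<not> XX k \<sigma>"
    then have all: "XX (Suc k) (\<sigma>(Suc k := b))" for b using XX_step[OF kn] by auto
    show "loses CC RR E (VG k)"
    proof (rule lose)
      fix v p assume mv: "is_move CC RR E (VG k) v p"
      from g_char[OF Suc.prems(2) E mv] kn obtain b where bj: "p = gp k b" "v = VG (Suc k)"
        by auto
      then show "v \<notin> pointing RR E \<and> wins CC RR (E - path_edges p) v"
        using IH[of b] all[of b] by auto
    qed
  qed
qed

lemma result: "wins CC RR E0 (VG 0) \<longleftrightarrow> qbf_true n m l"
proof -
  have n0: "0 < n" using n2 by simp
  have X0: "XX 0 (\<lambda>_. False) \<longleftrightarrow> qbf_true n m l" by (simp add: XX_def qbf_true_def)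
  have "(XX 0 (\<lambda>_. False) \<longrightarrow> wins CC RR E0 (VG 0)) \<and> (\<not> XX 0 (\<lambda>_. False) \<longrightarrow> loses CC RR E0 (VG 0))"
    by (rule main_ind[OF refl n0 ginv0])
  then show ?thesis using X0 excl(1)[of CC RR E0 "VG 0"] by blast
qed

end

theorem mainTheorem2:
  fixes n m :: nat and l :: "nat \<Rightarrow> nat \<Rightarrow> nat \<times> bool"
  assumes "2 \<le> n" and "even n" and "1 \<le> m"
    and "\<forall>i\<in>{1..m}. \<forall>j\<in>{1..3}. fst (l i j) \<in> {1..n}"
  shows "exists_player_wins (red_edges n m) (red_C n m) red_s (red_R m l) \<longleftrightarrow> qbf_true n m l"
proof -
  interpret red n m l using assms by unfold_locales
  show ?thesis using result by (simp add: exists_player_wins_def red_s_def)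
qed



end
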